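(* Let $\alpha=1/m$ with $m\in\mathbb{N}$, $m\ge 2$, let $h>0$ and $c>0$, and let $$L(s)=\exp\bigl\{-c\bigl((s+h)^{\alpha}-h^{\alpha}\bigr)\bigr\},\qquad s\ge0,$$ be the Laplace transform of a tempered positive stable distribution. For $n\in\mathbb{N}$ define $$g_n(s)=\exp\Bigl(h-\Bigl(\tfrac1n (s+h)^{\alpha}+\tfrac{n-1}{n}h^{\alpha}\Bigr)^{1/\alpha}\Bigr),\qquad s\ge0.$$ Then each $g_n$ is the Laplace transform of a probability distribution on $[0,\infty)$, and $L(s)=[L(-\log g_n(s))]^n$ for all $s\ge0$ and $n\in\mathbb{N}$; that is, the distribution with Laplace transform $L$ is casual stable. In particular (case $\alpha=1/2$) the inverse Gaussian distribution is casual stable.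
   Context: A nonnegative random variable with Laplace transform $L$ is called casual stable if for every $n\in\mathbb{N}$ there is the Laplace transform $g_n$ of a probability distribution on $[0,\infty)$ such that $L(s)=[L(-\log g_n(s))]^n$ for all $s\ge0$. (In the paper the constant is $c=\lambda^{\alpha}(1+\tan\frac{\pi\alpha}{2})$ with $\lambda>0$.) *)

theory Defs
  imports "HOL-Probability.Probability"
begin

definition is_laplace_transform_prob :: "(real \<Rightarrow> real) \<Rightarrow> bool" where
  "is_laplace_transform_prob g \<longleftrightarrow>
     (\<exists>M :: real measure. prob_space M \<and> sets M = sets borel \<and>
        (AE x in M. 0 \<le> x) \<and>
        (\<forall>s\<ge>0. g s = (\<integral>x. exp (- s * x) \<partial>M)))"

definition casual_stable :: "(real \<Rightarrow> real) \<Rightarrow> bool" where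
  "casual_stable L \<longleftrightarrow>
     (\<forall>n::nat. n \<ge> 1 \<longrightarrow> (\<exists>g. is_laplace_transform_prob g \<and>
        (\<forall>s\<ge>0. L s = (L (- ln (g s))) ^ n)))"

definition tps_L :: "real \<Rightarrow> real \<Rightarrow> real \<Rightarrow> real \<Rightarrow> real" where
  "tps_L \<alpha> c h s = exp (- c * ((s + h) powr \<alpha> - h powr \<alpha>))"

definition casual_g :: "real \<Rightarrow> real \<Rightarrow> nat \<Rightarrow> real \<Rightarrow> real" where
  "casual_g \<alpha> h n s =
     exp (h - ((1 / real n) * (s + h) powr \<alpha> + ((real n - 1) / real n) * h powr \<alpha>) powr (1 / \<alpha>))"

end

theory Submission
  imports Defs
begin


lemma lt_integrable:
  fixes M :: "real measure" and s :: real
  assumes "prob_space M" "sets M = sets borel" "AE x in M. 0 \<le> x" "s \<ge> 0"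
  shows "integrable M (\<lambda>x. exp (- s * x))"
proof -
  interpret prob_space M by fact
  show ?thesis
  proof (rule integrable_const_bound[where B=1])
    show "AE x in M. norm (exp (- s * x)) \<le> 1"
      using assms(3) by eventually_elim (use assms(4) mult_nonneg_nonneg[of s] in \<open>auto\<close>)
    show "(\<lambda>x. exp (- s * x)) \<in> borel_measurable M"
      by (subst measurable_cong_sets[OF assms(2) refl]) simp
  qed
qed

lemma lt_dirac:
  assumes "t \<ge> 0"
  shows "is_laplace_transform_prob (\<lambda>s. exp (- s * t))"
  unfolding is_laplace_transform_prob_def
  apply (rule exI[of _ "return borel t"])
  using assms by (auto simp: prob_space_return AE_return integral_return)

lemma exp_split_enn: "ennreal (exp (- s * (x + y))) = ennreal (exp (- s * x)) * ennreal (exp (- s * y))"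
  by (simp add: ennreal_mult[symmetric] exp_add[symmetric] algebra_simps)

lemma lt_mult:
  fixes f g :: "real \<Rightarrow> real"
  assumes "is_laplace_transform_prob f" "is_laplace_transform_prob g"
  shows "is_laplace_transform_prob (\<lambda>s. f s * g s)"
proof -
  obtain M where M: "prob_space M" "sets M = sets borel" "AE x in M. 0 \<le> x"
    "\<forall>s\<ge>0. f s = (\<integral>x. exp (- s * x) \<partial>M)"
    using assms(1) unfolding is_laplace_transform_prob_def by blast
  obtain N where N: "prob_space N" "sets N = sets borel" "AE x in N. 0 \<le> x"
    "\<forall>s\<ge>0. g s = (\<integral>x. exp (- s * x) \<partial>N)"
    using assms(2) unfolding is_laplace_transform_prob_def by blast
  interpret M: prob_space M by fact
  interpret N: prob_space N by fact
  have fm: "finite_measure M" "finite_measure N" by unfold_locales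
  note sM[measurable_cong] = M(2) 
  note sN[measurable_cong] = N(2)
  have nn: "(\<integral>\<^sup>+x. f x \<partial>(M \<star> N)) = (\<integral>\<^sup>+x. \<integral>\<^sup>+y. f (x + y) \<partial>N \<partial>M)"
    if [measurable]: "f \<in> borel_measurable borel" for f
    by (rule nn_integral_convolution[OF fm N(2) M(2)]) simp
  have "emeasure (M \<star> N) (space (M \<star> N)) = (\<integral>\<^sup>+x. \<integral>\<^sup>+y. 1 \<partial>N \<partial>M)"
    using nn[of "\<lambda>_. 1"] by simp
  also have "\<dots> = 1" by (simp add: M.emeasure_space_1 N.emeasure_space_1)
  finally have P: "prob_space (M \<star> N)" by (rule prob_spaceI)
  have "(\<integral>\<^sup>+x. indicator {..<0} x \<partial>(M \<star> N)) = (\<integral>\<^sup>+x. \<integral>\<^sup>+y. indicator {..<0::real} (x + y) \<partial>N \<partial>M)"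
    by (rule nn) simp
  also have "\<dots> = (\<integral>\<^sup>+x. 0 \<partial>M)"
  proof (rule nn_integral_cong_AE)
    show "AE x in M. (\<integral>\<^sup>+y. indicator {..<0::real} (x + y) \<partial>N) = 0"
      using M(3)
    proof eventually_elim
      case (elim x)
      have "(\<integral>\<^sup>+y. indicator {..<0::real} (x + y) \<partial>N) = (\<integral>\<^sup>+y. 0 \<partial>N)"
        by (rule nn_integral_cong_AE) (use N(3) elim in \<open>auto simp: indicator_def\<close>)
      then show ?case by simp
    qed
  qed
  finally have "emeasure (M \<star> N) {..<0} = 0" by simp
  then have AE: "AE x in M \<star> N. 0 \<le> x"
    by (intro AE_I[where N="{..<0}"]) auto
  show ?thesis unfolding is_laplace_transform_prob_def
  proof (intro exI conjI allI impI)
    show "prob_space (M \<star> N)" by fact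
    show "sets (M \<star> N) = sets borel" by simp
    show "AE x in M \<star> N. 0 \<le> x" by fact
    fix s :: real assume s: "s \<ge> 0"
    have "(\<integral>x. exp (- s * x) \<partial>(M \<star> N)) = enn2real (\<integral>\<^sup>+x. ennreal (exp (- s * x)) \<partial>(M \<star> N))"
      by (rule integral_eq_nn_integral) auto
    also have "(\<integral>\<^sup>+x. ennreal (exp (- s * x)) \<partial>(M \<star> N)) =
        (\<integral>\<^sup>+x. \<integral>\<^sup>+y. ennreal (exp (- s * (x + y))) \<partial>N \<partial>M)"
      by (rule nn) simp
    also have "\<dots> = (\<integral>\<^sup>+x. ennreal (exp (- s * x)) * (\<integral>\<^sup>+y. ennreal (exp (- s * y)) \<partial>N) \<partial>M)"
    proof (rule nn_integral_cong)
      fix x assume "x \<in> space M"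
      have "(\<integral>\<^sup>+y. ennreal (exp (- s * (x + y))) \<partial>N) = (\<integral>\<^sup>+y. ennreal (exp (- s * x)) * ennreal (exp (- s * y)) \<partial>N)"
        by (simp only: exp_split_enn)
      also have "\<dots> = ennreal (exp (- s * x)) * (\<integral>\<^sup>+y. ennreal (exp (- s * y)) \<partial>N)"
        by (rule nn_integral_cmult) measurable
      finally show "(\<integral>\<^sup>+y. ennreal (exp (- s * (x + y))) \<partial>N) = ennreal (exp (- s * x)) * (\<integral>\<^sup>+y. ennreal (exp (- s * y)) \<partial>N)" .
    qed
    also have "\<dots> = (\<integral>\<^sup>+x. ennreal (exp (- s * x)) \<partial>M) * (\<integral>\<^sup>+y. ennreal (exp (- s * y)) \<partial>N)"
      by (rule nn_integral_multc) measurable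
    also have "enn2real \<dots> = f s * g s"
    proof -
      have iM: "(\<integral>x. exp (- s * x) \<partial>M) = enn2real (\<integral>\<^sup>+x. ennreal (exp (- s * x)) \<partial>M)"
        by (intro integral_eq_nn_integral) auto
      have iN: "(\<integral>x. exp (- s * x) \<partial>N) = enn2real (\<integral>\<^sup>+x. ennreal (exp (- s * x)) \<partial>N)"
        by (intro integral_eq_nn_integral) auto
      show ?thesis using M(4) N(4) s iM iN by (simp only: enn2real_mult)
    qed
    finally show "f s * g s = (\<integral>x. exp (- s * x) \<partial>(M \<star> N))" by simp
  qed
qed



lemma lt_tail:
  fixes M :: "real measure" and s :: real
  assumes P: "prob_space M" and S: "sets M = sets borel" and AE: "AE x in M. 0 \<le> x" and s: "s > 0"
  shows "measure M {1/s<..} \<le> (1 - (\<integral>x. exp (- s * x) \<partial>M)) / (1 - exp (-1))"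
proof -
  interpret prob_space M by fact
  have c: "0 < 1 - exp (-1::real)" by simp
  have meas: "{1/s<..} \<in> sets M" using S by simp
  have int1: "integrable M (\<lambda>x. exp (- s * x))" using lt_integrable[OF P S AE] s by simp
  have int2: "integrable M (\<lambda>x. (1 - exp (-1)) * indicator {1/s<..} x :: real)"
    using meas by (intro integrable_mult_right) (simp add: integrable_indicator_iff less_top[symmetric])
  have "(1 - exp (-1)) * measure M {1/s<..} = (\<integral>x. (1 - exp (-1)) * indicator {1/s<..} x \<partial>M)"
    using meas by simp
  also have "\<dots> \<le> (\<integral>x. 1 - exp (- s * x) \<partial>M)"
  proof (rule integral_mono_AE)
    show "integrable M (\<lambda>x. 1 - exp (- s * x))" using int1 by simp
    show "AE x in M. (1 - exp (-1)) * indicator {1/s<..} x \<le> 1 - exp (- s * x)"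
      using AE
    proof eventually_elim
      case (elim x)
      show ?case
      proof (cases "x > 1/s")
        case True
        then have "s * x > 1" using s by (simp add: field_simps)
        then have "exp (- s * x) < exp (-1)" by simp
        then show ?thesis using True by simp
      next
        case False
        have "0 \<le> s * x" using s elim by simp
        then have "exp (- s * x) \<le> 1" by simp
        then show ?thesis using False by simp
      qed
    qed
  qed (use int2 in auto)
  also have "\<dots> = 1 - (\<integral>x. exp (- s * x) \<partial>M)"
    using int1 by (simp add: prob_space)
  finally show ?thesis using c by (simp add: field_simps)
qed



lemma rd_tail:
  fixes R :: "real measure"
  assumes "real_distribution R" "e > 0"
  shows "\<exists>K. measure R {K<..} < e"
proof -
  interpret real_distribution R by fact
  have "eventually (\<lambda>x. cdf R x > 1 - e) at_top"
    using cdf_lim_at_top_prob assms(2) by (intro order_tendstoD(1)) auto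
  then obtain K where K: "cdf R K > 1 - e" by (auto simp: eventually_at_top_linorder)
  have sp: "space R = UNIV" using sets_eq_imp_space_eq[OF events_eq_borel] by simp
  have "measure R ({..K} \<union> {K<..}) = measure R {..K} + measure R {K<..}"
    by (rule finite_measure_Union) auto
  moreover have "{..K} \<union> {K<..} = UNIV" by auto
  ultimately have "1 = cdf R K + measure R {K<..}"
    using prob_space sp by (simp add: cdf_def)
  then show ?thesis using K by (intro exI[of _ K]) linarith
qed



lemma lt_limit:
  fixes G :: "nat \<Rightarrow> real \<Rightarrow> real" and g :: "real \<Rightarrow> real"
  assumes lt: "\<And>n. is_laplace_transform_prob (G n)"
    and conv: "\<And>s. s \<ge> 0 \<Longrightarrow> (\<lambda>n. G n s) \<longlonglongrightarrow> g s"
    and cont: "(g \<longlongrightarrow> 1) (at_right 0)"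
  shows "is_laplace_transform_prob g"
proof -
  have "\<forall>n. \<exists>M. prob_space M \<and> sets M = sets borel \<and> (AE x in M. 0 \<le> x) \<and>
        (\<forall>s\<ge>0. G n s = (\<integral>x. exp (- s * x) \<partial>M))"
    using lt unfolding is_laplace_transform_prob_def by blast
  then obtain M where M: "\<And>n. prob_space (M n)" "\<And>n. sets (M n) = sets borel"
    "\<And>n. AE x in M n. 0 \<le> x" "\<And>n s. s \<ge> 0 \<Longrightarrow> G n s = (\<integral>x. exp (- s * x) \<partial>M n)"
    by metis
  have rd: "real_distribution (M n)" for n
    using M by (simp add: real_distribution_def real_distribution_axioms_def)
  define c :: real where "c = 1 - exp (-1)"
  have c: "c > 0" by (simp add: c_def)
  have tight: "tight M"
    unfolding tight_def
  proof (intro conjI allI impI)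
    show "real_distribution (M n)" for n by (rule rd)
    fix e :: real assume e: "e > 0"
    have "eventually (\<lambda>s. g s > 1 - c * e / 2) (at_right 0)"
      using cont c e by (intro order_tendstoD(1)) auto
    then obtain s0 where s0: "s0 > 0" "g s0 > 1 - c * e / 2"
      by (auto simp: eventually_at_right_field) (metis field_lbound_gt_zero)
    have "eventually (\<lambda>n. G n s0 > 1 - c * e) sequentially"
    proof (rule order_tendstoD(1))
      show "(\<lambda>n. G n s0) \<longlonglongrightarrow> g s0" using conv[of s0] s0 by simp
      show "1 - c * e < g s0" using s0 mult_pos_pos[OF c e] by linarith
    qed
    then obtain N0 where N0: "\<And>n. n \<ge> N0 \<Longrightarrow> G n s0 > 1 - c * e"
      by (auto simp: eventually_sequentially)
    have "\<forall>n. \<exists>K. measure (M n) {K<..} < e" using rd_tail[OF rd e] by blast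
    then obtain Kf where Kf: "\<And>n. measure (M n) {Kf n<..} < e" by metis
    define K where "K = Max (insert (1/s0) (Kf ` {..<N0}))"
    have K1: "1/s0 \<le> K" unfolding K_def by (intro Max_ge) auto
    have K2: "Kf n \<le> K" if "n < N0" for n unfolding K_def using that by (intro Max_ge) auto
    have tail: "measure (M n) {K<..} < e" for n
    proof (cases "n < N0")
      case True
      have "measure (M n) {K<..} \<le> measure (M n) {Kf n<..}"
        using K2[OF True] M(2) by (intro finite_measure.finite_measure_mono prob_space.finite_measure[OF M(1)]) auto
      then show ?thesis using Kf[of n] by linarith
    next
      case False
      have "measure (M n) {K<..} \<le> measure (M n) {1/s0<..}"
        using K1 M(2) by (intro finite_measure.finite_measure_mono prob_space.finite_measure[OF M(1)]) auto
      also have "\<dots> \<le> (1 - G n s0) / c"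
        using lt_tail[OF M(1) M(2) M(3) s0(1)] M(4)[of s0 n] s0 by (simp add: c_def)
      also have "\<dots> < e" using N0[of n] False c by (simp add: field_simps)
      finally show ?thesis .
    qed
    show "\<exists>a b. a < b \<and> (\<forall>n. 1 - e < measure (M n) {a<..b})"
    proof (intro exI conjI allI)
      show "-1 < max K 0" by simp
      fix n
      interpret prob_space "M n" by (rule M(1))
      have ev: "{0..} \<in> sets (M n)" using M(2) by simp
      have p1: "measure (M n) {0..} = 1" using prob_eq_1[OF ev] M(3)[of n] by simp
      have "{0..} \<subseteq> {-1<..max K 0} \<union> {K<..}" by auto
      then have "measure (M n) {0..} \<le> measure (M n) ({-1<..max K 0} \<union> {K<..})"
        using M(2) by (intro finite_measure_mono) auto
      also have "\<dots> \<le> measure (M n) {-1<..max K 0} + measure (M n) {K<..}"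
        using M(2) by (intro measure_Un_le) auto
      finally show "1 - e < measure (M n) {-1<..max K 0}" using p1 tail[of n] by linarith
    qed
  qed
  obtain r L where r: "strict_mono r" and L: "real_distribution L" and wc: "weak_conv_m (M \<circ> r) L"
    using tight_imp_convergent_subsubsequence[OF tight strict_mono_id] by auto
  interpret L: real_distribution L by (rule L)
  have rd': "real_distribution ((M \<circ> r) n)" for n using rd by simp
  note wlim = weak_conv_imp_integral_bdd_continuous_conv[OF rd' L wc]
  have Lsp: "space L = UNIV" using sets_eq_imp_space_eq[OF L.events_eq_borel] by simp
  define f :: "real \<Rightarrow> real" where "f x = min 1 (max 0 (- x))" for x
  have fc: "isCont f x" for x unfolding f_def by (intro continuous_intros)
  have fb: "norm (f x) \<le> 1" for x unfolding f_def by auto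
  have fmeas: "f \<in> borel_measurable N" if "sets N = sets borel" for N :: "real measure"
    unfolding measurable_cong_sets[OF that refl] f_def by measurable
  have "(\<lambda>n. integral\<^sup>L ((M \<circ> r) n) f) \<longlonglongrightarrow> integral\<^sup>L L f"
    by (rule wlim[OF fc fb])
  moreover have "integral\<^sup>L ((M \<circ> r) n) f = 0" for n
  proof -
    have "integral\<^sup>L (M (r n)) f = integral\<^sup>L (M (r n)) (\<lambda>_. 0)"
    proof (rule integral_cong_AE)
      show "f \<in> borel_measurable (M (r n))" by (rule fmeas[OF M(2)])
      show "(\<lambda>_. 0::real) \<in> borel_measurable (M (r n))" by simp
      show "AE x in M (r n). f x = 0" using M(3)[of "r n"] by eventually_elim (simp add: f_def)
    qed
    then show ?thesis by simp
  qed
  ultimately have "(\<lambda>n. 0::real) \<longlonglongrightarrow> integral\<^sup>L L f" by simp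
  then have "integral\<^sup>L L f = 0" using LIMSEQ_unique[OF tendsto_const] by metis
  moreover have "integrable L f"
    by (rule L.integrable_const_bound[where B=1]) (use fb in \<open>simp_all add: fmeas[OF L.events_eq_borel]\<close>)
  ultimately have "AE x in L. f x = 0"
    by (subst integral_nonneg_eq_0_iff_AE[symmetric]) (auto simp: f_def)
  then have AEL: "AE x in L. 0 \<le> x"
    by eventually_elim (auto simp: f_def min_def max_def split: if_splits)
  show ?thesis unfolding is_laplace_transform_prob_def
  proof (intro exI conjI allI impI)
    show "prob_space L" by unfold_locales
    show "sets L = sets borel" by simp
    show "AE x in L. 0 \<le> x" by fact
    fix s :: real assume s: "s \<ge> 0"
    define fs where "fs x = exp (- s * max 0 x)" for x
    have fsc: "isCont fs x" for x unfolding fs_def by (intro continuous_intros)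
    have fsb: "norm (fs x) \<le> 1" for x unfolding fs_def using s by (simp add: mult_nonneg_nonneg)
    have fsmeas: "fs \<in> borel_measurable N" if "sets N = sets borel" for N :: "real measure"
      unfolding measurable_cong_sets[OF that refl] fs_def by measurable
    have "(\<lambda>n. integral\<^sup>L ((M \<circ> r) n) fs) \<longlonglongrightarrow> integral\<^sup>L L fs"
      by (rule wlim[OF fsc fsb])
    moreover have "integral\<^sup>L ((M \<circ> r) n) fs = G (r n) s" for n
    proof -
      have "integral\<^sup>L (M (r n)) fs = (\<integral>x. exp (- s * x) \<partial>M (r n))"
      proof (rule integral_cong_AE)
        show "fs \<in> borel_measurable (M (r n))" by (rule fsmeas[OF M(2)])
        show "(\<lambda>x. exp (- s * x)) \<in> borel_measurable (M (r n))"
          unfolding measurable_cong_sets[OF M(2) refl] by measurable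
        show "AE x in M (r n). fs x = exp (- s * x)" using M(3)[of "r n"] by eventually_elim (simp add: fs_def)
      qed
      then show ?thesis using M(4)[OF s, of "r n"] by simp
    qed
    ultimately have "(\<lambda>n. G (r n) s) \<longlonglongrightarrow> integral\<^sup>L L fs" by simp
    moreover have "(\<lambda>n. G (r n) s) \<longlonglongrightarrow> g s"
      using LIMSEQ_subseq_LIMSEQ[OF conv[OF s] r] by (simp add: o_def)
    ultimately have "g s = integral\<^sup>L L fs" using LIMSEQ_unique by blast
    also have "\<dots> = (\<integral>x. exp (- s * x) \<partial>L)"
    proof (rule integral_cong_AE)
      show "fs \<in> borel_measurable L" by (rule fsmeas[OF L.events_eq_borel])
      show "(\<lambda>x. exp (- s * x)) \<in> borel_measurable L" by measurable
      show "AE x in L. fs x = exp (- s * x)" using AEL by eventually_elim (simp add: fs_def)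
    qed
    finally show "g s = (\<integral>x. exp (- s * x) \<partial>L)" .
  qed
qed



lemma gamma_scaled:
  fixes a t :: real
  assumes a: "a > 0" and t: "t > 0"
  shows "(\<integral>\<^sup>+x. ennreal (x powr (a - 1) * exp (- t * x)) * indicator {0<..} x \<partial>lborel)
         = ennreal (Gamma a / t powr a)"
proof -
  define f :: "real \<Rightarrow> ennreal" where "f y = ennreal (indicator {0..} y * y powr (a - 1) / exp y)" for y
  have fm: "f \<in> borel_measurable borel" unfolding f_def by measurable
  have "ennreal (Gamma a) = (\<integral>\<^sup>+y. f y \<partial>lborel)"
    unfolding f_def using Gamma_conv_nn_integral_real[OF a] by simp
  also have "\<dots> = ennreal \<bar>t\<bar> * (\<integral>\<^sup>+x. f (0 + t * x) \<partial>lborel)"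
    using nn_integral_real_affine[OF fm, of t 0] t by simp
  also have "(\<integral>\<^sup>+x. f (0 + t * x) \<partial>lborel) =
      (\<integral>\<^sup>+x. ennreal (t powr (a - 1)) * (ennreal (x powr (a - 1) * exp (- t * x)) * indicator {0<..} x) \<partial>lborel)"
  proof (rule nn_integral_cong)
    fix x :: real
    show "f (0 + t * x) = ennreal (t powr (a - 1)) * (ennreal (x powr (a - 1) * exp (- t * x)) * indicator {0<..} x)"
    proof (cases "x > 0")
      case True
      then have "t * x \<ge> 0" using t by simp
      then show ?thesis using True t
        by (simp add: f_def powr_mult exp_minus field_simps) (subst ennreal_mult[symmetric], auto)
    next
      case False
      then show ?thesis using t
        by (cases "x = 0") (auto simp: f_def indicator_def zero_le_mult_iff)
    qed
  qed
  also have "\<dots> = ennreal (t powr (a - 1)) * (\<integral>\<^sup>+x. ennreal (x powr (a - 1) * exp (- t * x)) * indicator {0<..} x \<partial>lborel)"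
    by (rule nn_integral_cmult) measurable
  finally have eq: "ennreal (Gamma a) = ennreal (t * t powr (a - 1)) * 
      (\<integral>\<^sup>+x. ennreal (x powr (a - 1) * exp (- t * x)) * indicator {0<..} x \<partial>lborel)"
    using t by (simp add: ennreal_mult mult.assoc)
  have tt: "t * t powr (a - 1) = t powr a"
    using t by (simp add: powr_diff)
  have pos: "t powr a > 0" using t by simp
  have "ennreal (1 / t powr a) * ennreal (Gamma a) = 
      (\<integral>\<^sup>+x. ennreal (x powr (a - 1) * exp (- t * x)) * indicator {0<..} x \<partial>lborel)"
    using pos unfolding eq tt
    by (simp add: mult.assoc[symmetric] ennreal_mult[symmetric])
  then show ?thesis
    using Gamma_real_pos[OF a] pos by (simp add: ennreal_mult[symmetric])
qed



definition ell :: "real \<Rightarrow> real \<Rightarrow> real \<Rightarrow> real" where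
  "ell \<beta> h x = x powr (-1 - \<beta>) * exp (- h * x)"

lemma ennreal_times_ind: "ennreal (a * indicator A x) = ennreal a * indicator A x"
  by (simp add: indicator_def)

lemma levy_inner:
  fixes \<beta> h s x :: real
  assumes x: "x > 0" and s: "s \<ge> 0"
  shows "ennreal (ell \<beta> h x * (1 - exp (- s * x))) =
         (\<integral>\<^sup>+t. ennreal (x powr (- \<beta>) * exp (- t * x)) * indicator {h..h+s} t \<partial>lborel)"
proof -
  define f where "f t = x powr (- \<beta>) * exp (- t * x)" for t
  define F where "F t = - (x powr (-1 - \<beta>)) * exp (- t * x)" for t
  have xp: "x powr (-1 - \<beta>) * x = x powr (- \<beta>)"
    using x by (simp add: powr_add[of x "-1-\<beta>" 1, simplified])
  have der: "(F has_real_derivative f t) (at t)" for t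
  proof -
    have "((\<lambda>t. exp (- t * x)) has_real_derivative (exp (- t * x) * (- x))) (at t)"
      by (auto intro!: derivative_eq_intros)
    then have "(F has_real_derivative (- (x powr (-1 - \<beta>)) * (exp (- t * x) * (- x)))) (at t)"
      unfolding F_def by (rule DERIV_cmult)
    moreover have "- (x powr (-1 - \<beta>)) * (exp (- t * x) * (- x)) = f t"
      unfolding f_def using xp by (simp add: algebra_simps)
    ultimately show ?thesis by simp
  qed
  have cont: "isCont f t" for t unfolding f_def by (intro continuous_intros)
  have int: "integrable lborel (\<lambda>t. f t * indicator {h..h+s} t)"
    by (rule borel_integrable_atLeastAtMost) (use cont in auto)
  have "(\<integral>t. f t * indicator {h..h+s} t \<partial>lborel) = (\<integral>t. indicator {h..h+s} t *\<^sub>R f t \<partial>lborel)"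
    by (simp add: mult.commute)
  also have "\<dots> = F (h + s) - F h"
  proof (rule integral_FTC_atLeastAtMost)
    show "h \<le> h + s" using s by simp
    show "(F has_vector_derivative f t) (at t within {h..h + s})" for t
      using der[of t] by (simp add: has_real_derivative_iff_has_vector_derivative[symmetric] has_field_derivative_at_within)
    show "continuous_on {h..h + s} f" using cont by (simp add: continuous_at_imp_continuous_on)
  qed
  also have "\<dots> = ell \<beta> h x * (1 - exp (- s * x))"
  proof -
    have e: "exp (- (h + s) * x) = exp (- h * x) * exp (- s * x)"
      by (simp add: exp_add[symmetric] algebra_simps)
    show ?thesis unfolding F_def ell_def e by (simp add: algebra_simps)
  qed
  finally have I: "(\<integral>t. f t * indicator {h..h+s} t \<partial>lborel) = ell \<beta> h x * (1 - exp (- s * x))" .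
  have "(\<integral>\<^sup>+t. ennreal (f t) * indicator {h..h+s} t \<partial>lborel) = (\<integral>\<^sup>+t. ennreal (f t * indicator {h..h+s} t) \<partial>lborel)"
    by (simp add: ennreal_times_ind)
  also have "\<dots> = ennreal (\<integral>t. f t * indicator {h..h+s} t \<partial>lborel)"
    by (rule nn_integral_eq_integral[OF int]) (simp add: f_def)
  finally show ?thesis using I by (simp add: f_def)
qed



lemma levy_int:
  fixes \<beta> h s :: real
  assumes b: "0 < \<beta>" "\<beta> < 1" and h: "h > 0" and s: "s \<ge> 0"
  shows "(\<integral>\<^sup>+x. ennreal (ell \<beta> h x * (1 - exp (- s * x))) * indicator {0<..} x \<partial>lborel)
       = ennreal (Gamma (1 - \<beta>) / \<beta> * ((s + h) powr \<beta> - h powr \<beta>))"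
proof -
  define g where "g x t = ennreal (x powr (- \<beta>) * exp (- t * x)) * indicator {h..h+s} t * indicator {0<..} x" for x t :: real
  have gm: "case_prod g \<in> borel_measurable (lborel \<Otimes>\<^sub>M lborel)"
    unfolding g_def by measurable
  have "(\<integral>\<^sup>+x. ennreal (ell \<beta> h x * (1 - exp (- s * x))) * indicator {0<..} x \<partial>lborel)
      = (\<integral>\<^sup>+x. \<integral>\<^sup>+t. g x t \<partial>lborel \<partial>lborel)"
  proof (rule nn_integral_cong)
    fix x :: real
    show "ennreal (ell \<beta> h x * (1 - exp (- s * x))) * indicator {0<..} x = (\<integral>\<^sup>+t. g x t \<partial>lborel)"
    proof (cases "x > 0")
      case True
      then show ?thesis unfolding g_def using levy_inner[OF True s, of \<beta> h] by simp
    next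
      case False
      then show ?thesis unfolding g_def by simp
    qed
  qed
  also have "\<dots> = (\<integral>\<^sup>+t. \<integral>\<^sup>+x. g x t \<partial>lborel \<partial>lborel)"
    by (rule lborel_pair.Fubini'[OF gm, symmetric])
  also have "\<dots> = (\<integral>\<^sup>+t. ennreal (Gamma (1 - \<beta>) / t powr (1 - \<beta>) * indicator {h..h+s} t) \<partial>lborel)"
  proof (rule nn_integral_cong)
    fix t :: real
    show "(\<integral>\<^sup>+x. g x t \<partial>lborel) = ennreal (Gamma (1 - \<beta>) / t powr (1 - \<beta>) * indicator {h..h+s} t)"
    proof (cases "t \<in> {h..h+s}")
      case True
      then have t: "t > 0" using h by auto
      have "(\<integral>\<^sup>+x. g x t \<partial>lborel) = (\<integral>\<^sup>+x. ennreal (x powr ((1 - \<beta>) - 1) * exp (- t * x)) * indicator {0<..} x \<partial>lborel)"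
        unfolding g_def using True by simp
      also have "\<dots> = ennreal (Gamma (1 - \<beta>) / t powr (1 - \<beta>))"
        by (rule gamma_scaled) (use b t in auto)
      finally show ?thesis using True by simp
    next
      case False
      then show ?thesis unfolding g_def by simp
    qed
  qed
  also have "\<dots> = ennreal (Gamma (1 - \<beta>) / \<beta> * ((s + h) powr \<beta> - h powr \<beta>))"
  proof -
    define f where "f t = Gamma (1 - \<beta>) / t powr (1 - \<beta>)" for t :: real
    define F where "F t = Gamma (1 - \<beta>) / \<beta> * t powr \<beta>" for t :: real
    have cont: "isCont f t" if "t > 0" for t unfolding f_def using that by (intro continuous_intros) auto
    have der: "(F has_real_derivative f t) (at t)" if "t > 0" for t
    proof -
      have "(F has_real_derivative (Gamma (1 - \<beta>) / \<beta> * (\<beta> * t powr (\<beta> - 1)))) (at t)"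
        unfolding F_def by (intro DERIV_cmult has_real_derivative_powr that)
      moreover have "Gamma (1 - \<beta>) / \<beta> * (\<beta> * t powr (\<beta> - 1)) = f t"
        unfolding f_def using b that by (simp add: powr_minus[symmetric] divide_inverse)
      ultimately show ?thesis by simp
    qed
    have int: "integrable lborel (\<lambda>t. f t * indicator {h..h+s} t)"
      by (rule borel_integrable_atLeastAtMost) (use cont h in auto)
    have "(\<integral>t. f t * indicator {h..h+s} t \<partial>lborel) = (\<integral>t. indicator {h..h+s} t *\<^sub>R f t \<partial>lborel)"
      by (simp add: mult.commute)
    also have "\<dots> = F (h + s) - F h"
    proof (rule integral_FTC_atLeastAtMost)
      show "h \<le> h + s" using s by simp
      show "(F has_vector_derivative f t) (at t within {h..h + s})" if "h \<le> t" "t \<le> h + s" for t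
        using der[of t] that h by (simp add: has_real_derivative_iff_has_vector_derivative[symmetric] has_field_derivative_at_within)
      show "continuous_on {h..h + s} f" using cont h by (intro continuous_at_imp_continuous_on) auto
    qed
    also have "\<dots> = Gamma (1 - \<beta>) / \<beta> * ((s + h) powr \<beta> - h powr \<beta>)"
      unfolding F_def by (simp add: algebra_simps)
    finally have I: "(\<integral>t. f t * indicator {h..h+s} t \<partial>lborel) = Gamma (1 - \<beta>) / \<beta> * ((s + h) powr \<beta> - h powr \<beta>)" .
    have "(\<integral>\<^sup>+t. ennreal (f t * indicator {h..h+s} t) \<partial>lborel) = ennreal (\<integral>t. f t * indicator {h..h+s} t \<partial>lborel)"
      by (rule nn_integral_eq_integral[OF int]) (use b in \<open>auto simp: f_def indicator_def intro!: AE_I2 divide_nonneg_nonneg Gamma_real_nonneg\<close>)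
    then show ?thesis using I by (simp add: f_def)
  qed
  finally show ?thesis .
qed



lemma lt_density:
  fixes F :: "real \<Rightarrow> real"
  assumes Fm: "F \<in> borel_measurable borel" and Fnn: "\<And>x. 0 \<le> F x" and Fneg: "\<And>x. x < 0 \<Longrightarrow> F x = 0"
    and Fint: "integrable lborel F" and F1: "(\<integral>x. F x \<partial>lborel) = 1"
  shows "is_laplace_transform_prob (\<lambda>s. \<integral>x. F x * exp (- s * x) \<partial>lborel)"
proof -
  define M where "M = density lborel (\<lambda>x. ennreal (F x))"
  have sM: "sets M = sets borel" unfolding M_def by simp
  have spM: "space M = UNIV" unfolding M_def by simp
  have "emeasure M (space M) = (\<integral>\<^sup>+x. ennreal (F x) * indicator UNIV x \<partial>lborel)"
    unfolding M_def by (subst emeasure_density) (use Fm in auto)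
  also have "\<dots> = (\<integral>\<^sup>+x. ennreal (F x) \<partial>lborel)" by simp
  also have "\<dots> = ennreal (\<integral>x. F x \<partial>lborel)"
    by (rule nn_integral_eq_integral[OF Fint]) (simp add: Fnn)
  also have "\<dots> = 1" using F1 by simp
  finally have P: "prob_space M" by (rule prob_spaceI)
  have "emeasure M {..<0} = (\<integral>\<^sup>+x. ennreal (F x) * indicator {..<0} x \<partial>lborel)"
    unfolding M_def by (subst emeasure_density) (use Fm in auto)
  also have "\<dots> = (\<integral>\<^sup>+x. 0 \<partial>(lborel :: real measure))"
    by (rule nn_integral_cong) (auto simp: indicator_def Fneg)
  finally have "emeasure M {..<0} = 0" by simp
  then have AE: "AE x in M. 0 \<le> x"
    by (intro AE_I[where N="{..<0}"]) (auto simp: sM)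
  show ?thesis unfolding is_laplace_transform_prob_def
  proof (intro exI conjI allI impI)
    show "prob_space M" by fact
    show "sets M = sets borel" by fact
    show "AE x in M. 0 \<le> x" by fact
    fix s :: real
    show "(\<integral>x. F x * exp (- s * x) \<partial>lborel) = (\<integral>x. exp (- s * x) \<partial>M)"
      unfolding M_def by (subst integral_density) (use Fm Fnn in auto)
  qed
qed



lemma pow_exp_limit:
  fixes y :: "nat \<Rightarrow> real" and N :: "nat \<Rightarrow> nat"
  assumes y: "y \<longlonglongrightarrow> L" and N: "filterlim N at_top sequentially"
  shows "(\<lambda>n. (1 - y n / real (N n)) ^ N n) \<longlonglongrightarrow> exp (- L)"
proof -
  have Nr: "filterlim (\<lambda>n. real (N n)) at_top sequentially"
    by (rule filterlim_compose[OF filterlim_real_sequentially N])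
  define z where "z n = y n / real (N n)" for n
  have z: "z \<longlonglongrightarrow> 0" unfolding z_def
    by (rule tendsto_divide_0[OF y filterlim_at_top_imp_at_infinity[OF Nr]])
  have ev1: "eventually (\<lambda>n. \<bar>z n\<bar> \<le> 1/2) sequentially"
    using tendstoD[OF z, of "1/2"] by (simp add: dist_real_def) (auto elim: eventually_mono)
  have ev2: "eventually (\<lambda>n. real (N n) > 0) sequentially"
    using Nr unfolding filterlim_at_top_dense by (metis of_nat_0 of_nat_less_iff)
  define w where "w n = real (N n) * (ln (1 + (- z n)) - (- z n))" for n
  have w: "w \<longlonglongrightarrow> 0"
  proof (rule Lim_null_comparison)
    show "eventually (\<lambda>n. norm (w n) \<le> 2 * \<bar>y n\<bar> * \<bar>z n\<bar>) sequentially"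
      using ev1 ev2
    proof eventually_elim
      case (elim n)
      have "\<bar>ln (1 + (- z n)) - (- z n)\<bar> \<le> 2 * (- z n)\<^sup>2"
        by (rule abs_ln_one_plus_x_minus_x_bound) (use elim in simp)
      then have "norm (w n) \<le> real (N n) * (2 * (z n)\<^sup>2)"
        unfolding w_def using elim by (simp add: abs_mult)
      also have "\<dots> = 2 * \<bar>y n\<bar> * \<bar>z n\<bar>"
        using elim by (simp add: z_def power2_eq_square abs_mult field_simps)
      finally show ?case .
    qed
    show "(\<lambda>n. 2 * \<bar>y n\<bar> * \<bar>z n\<bar>) \<longlonglongrightarrow> 0"
      using tendsto_mult[OF tendsto_mult[OF tendsto_const tendsto_rabs[OF y]] tendsto_rabs_zero[OF z]] by simp
  qed
  have "(\<lambda>n. - y n + w n) \<longlonglongrightarrow> - L + 0"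
    by (intro tendsto_add tendsto_minus y w)
  then have lim: "(\<lambda>n. exp (- y n + w n)) \<longlonglongrightarrow> exp (- L)"
    by (intro tendsto_exp) simp
  show ?thesis
  proof (rule Lim_transform_eventually[OF lim])
    show "eventually (\<lambda>n. exp (- y n + w n) = (1 - y n / real (N n)) ^ N n) sequentially"
      using ev1 ev2
    proof eventually_elim
      case (elim n)
      have pos: "1 - z n > 0" using elim by simp
      have "- y n + w n = real (N n) * ln (1 - z n)"
        unfolding w_def using elim by (simp add: z_def field_simps)
      also have "\<dots> = ln ((1 - z n) ^ N n)" by (simp add: ln_realpow)
      finally have "exp (- y n + w n) = (1 - z n) ^ N n" using pos by simp
      then show ?case by (simp add: z_def)
    qed
  qed
qed



lemma lt_one: "is_laplace_transform_prob (\<lambda>s. 1)"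
  using lt_dirac[of 0] by simp

lemma lt_power: "is_laplace_transform_prob g \<Longrightarrow> is_laplace_transform_prob (\<lambda>s. g s ^ n)"
proof (induction n)
  case 0 then show ?case using lt_one by simp
next
  case (Suc n)
  then show ?case using lt_mult[OF Suc.prems Suc.IH] by simp
qed

lemma lt_prod:
  assumes "finite A" "\<And>k. k \<in> A \<Longrightarrow> is_laplace_transform_prob (f k)"
  shows "is_laplace_transform_prob (\<lambda>s. \<Prod>k\<in>A. f k s)"
  using assms
proof (induction A rule: finite_induct)
  case empty then show ?case using lt_one by simp
next
  case (insert a A)
  then show ?case using lt_mult[of "f a" "\<lambda>s. \<Prod>k\<in>A. f k s"] by simp
qed

lemma ell_nonneg: "0 \<le> ell \<beta> h x"
  unfolding ell_def by simp

lemma ell_cont: "x > 0 \<Longrightarrow> isCont (ell \<beta> h) x"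
  unfolding ell_def by (intro continuous_intros) auto

lemma ell_meas[measurable]: "ell \<beta> h \<in> borel_measurable borel"
  unfolding ell_def by measurable

lemma ell_int:
  assumes "a > 0" "\<And>x. isCont g x"
  shows "integrable lborel (\<lambda>x. ell \<beta> h x * g x * indicator {a..b} x)"
  by (rule borel_integrable_atLeastAtMost) (use assms ell_cont in \<open>auto intro!: continuous_intros\<close>)

lemma ell_bound:
  assumes k: "k \<ge> 1" and x: "1/k \<le> x" and b: "0 < \<beta>" "\<beta> < 1"
  shows "ell \<beta> h x \<le> k^2 * exp (- h * x)"
proof -
  have xp: "x > 0" using k x by (smt (verit) divide_pos_pos)
  have "x powr (-1 - \<beta>) \<le> (1/k) powr (-1 - \<beta>)"
    by (rule powr_mono2') (use b k x in auto)
  also have "\<dots> = k powr (1 + \<beta>)"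
  proof -
    have "(1/k) powr (-1-\<beta>) = 1 powr (-1-\<beta>) / k powr (-1-\<beta>)" by (rule powr_divide)
    also have "k powr (-1-\<beta>) = inverse (k powr (1+\<beta>))" using powr_minus[of k "1+\<beta>"] by simp
    finally show ?thesis by (simp only: divide_inverse inverse_inverse_eq mult_1 powr_one_eq_one)
  qed
  also have "\<dots> \<le> k powr 2" by (rule powr_mono) (use b k in auto)
  also have "\<dots> = k^2" using k by (simp add: powr_realpow'[of k 2, simplified])
  finally show ?thesis unfolding ell_def by (intro mult_right_mono) auto
qed



lemma ell_int1:
  assumes "a > 0"
  shows "integrable lborel (\<lambda>x. ell \<beta> h x * indicator {a..b} x)"
  by (rule borel_integrable_atLeastAtMost) (use assms ell_cont in auto)

lemma T_bound:
  assumes k: "k \<ge> 1" and b: "0 < \<beta>" "\<beta> < 1" and h: "h > 0"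
  shows "0 \<le> (\<integral>x. ell \<beta> h x * indicator {1/k..k} x \<partial>lborel)"
    and "(\<integral>x. ell \<beta> h x * indicator {1/k..k} x \<partial>lborel) \<le> k^3"
proof -
  show "0 \<le> (\<integral>x. ell \<beta> h x * indicator {1/k..k} x \<partial>lborel)"
    by (rule integral_nonneg_AE) (simp add: ell_nonneg)
  have kpos: "1/k > 0" using k by simp
  have "(\<integral>x. ell \<beta> h x * indicator {1/k..k} x \<partial>lborel) \<le> (\<integral>x. k^2 * indicator {1/k..k} x \<partial>lborel)"
  proof (rule integral_mono)
    show "integrable lborel (\<lambda>x. ell \<beta> h x * indicator {1/k..k} x)" by (rule ell_int1[OF kpos])
    show "integrable lborel (\<lambda>x. k^2 * indicator {1/k..k} x :: real)"
      by (intro integrable_mult_right) (simp add: integrable_indicator_iff emeasure_lborel_Icc_eq)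
    fix x :: real
    show "ell \<beta> h x * indicator {1/k..k} x \<le> k^2 * indicator {1/k..k} x"
    proof (cases "x \<in> {1/k..k}")
      case True
      then have x: "1/k \<le> x" by simp
      then have "x > 0" using kpos by linarith
      then have "exp (- h * x) \<le> 1" using h by simp
      then have "k^2 * exp (- h * x) \<le> k^2" by (simp add: mult_left_le)
      then show ?thesis using True ell_bound[OF k x b, of h] by simp
    qed simp
  qed
  also have "\<dots> = k^2 * (k - 1/k)"
  proof -
    have "1/k \<le> k" using k by (smt (verit) divide_le_eq_1_pos)
    then show ?thesis by simp
  qed
  also have "\<dots> \<le> k^3" using k by (simp add: algebra_simps power3_eq_cube power2_eq_square)
  finally show "(\<integral>x. ell \<beta> h x * indicator {1/k..k} x \<partial>lborel) \<le> k^3" .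
qed



lemma P_conv:
  fixes kk :: "nat \<Rightarrow> real"
  assumes b: "0 < \<beta>" "\<beta> < 1" and h: "h > 0" and s: "s \<ge> 0"
    and kk1: "\<And>n. kk n \<ge> 1" and kkinc: "incseq kk" and kklim: "filterlim kk at_top sequentially"
  shows "(\<lambda>n. \<integral>x. ell \<beta> h x * (1 - exp (- s * x)) * indicator {1/kk n..kk n} x \<partial>lborel)
         \<longlonglongrightarrow> Gamma (1 - \<beta>) / \<beta> * ((s + h) powr \<beta> - h powr \<beta>)"
proof -
  define g where "g x = ell \<beta> h x * (1 - exp (- s * x))" for x
  have gnn: "0 \<le> g x" if "x \<ge> 0" for x
    unfolding g_def using that s by (intro mult_nonneg_nonneg ell_nonneg) (simp add: mult_nonneg_nonneg)
  define f where "f n x = ennreal (g x) * indicator {1/kk n..kk n} x" for n x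
  define u where "u x = ennreal (g x) * indicator {0<..} x" for x
  have inc: "incseq f"
  proof (rule incseq_SucI, rule le_funI)
    fix n x
    have "kk n \<le> kk (Suc n)" using kkinc by (simp add: incseq_Suc_iff)
    moreover have "1 / kk (Suc n) \<le> 1 / kk n" using kk1[of n] calculation
      by (intro divide_left_mono) auto
    ultimately have "{1/kk n..kk n} \<subseteq> {1/kk (Suc n)..kk (Suc n)}" by auto
    then show "f n x \<le> f (Suc n) x"
      unfolding f_def by (intro mult_left_mono) (auto simp: indicator_def)
  qed
  have pw: "(\<lambda>n. f n x) \<longlonglongrightarrow> u x" for x
  proof (cases "x > 0")
    case True
    have "eventually (\<lambda>n. kk n > max x (1/x)) sequentially"
      using kklim unfolding filterlim_at_top_dense by blast
    then have "eventually (\<lambda>n. f n x = u x) sequentially"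
    proof eventually_elim
      case (elim n)
      have "1 / kk n \<le> x"
      proof -
        have "1/x < kk n" using elim by simp
        then show ?thesis using True kk1[of n] by (simp add: field_simps)
      qed
      then show ?case using elim True unfolding f_def u_def by (simp add: indicator_def)
    qed
    then show ?thesis by (rule tendsto_eventually)
  next
    case False
    have "f n x = u x" for n
    proof -
      have "1/kk n > 0" using kk1[of n] by simp
      then have "\<not> (1/kk n \<le> x)" using False by linarith
      then show ?thesis using False unfolding f_def u_def by (simp add: indicator_def)
    qed
    then show ?thesis by simp
  qed
  have "(\<lambda>n. integral\<^sup>N lborel (f n)) \<longlonglongrightarrow> integral\<^sup>N lborel u"
    by (rule nn_integral_LIMSEQ[OF inc _ pw]) (simp add: f_def g_def)
  also have "integral\<^sup>N lborel u = ennreal (Gamma (1 - \<beta>) / \<beta> * ((s + h) powr \<beta> - h powr \<beta>))"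
    unfolding u_def g_def by (rule levy_int[OF b h s])
  finally have lim: "(\<lambda>n. integral\<^sup>N lborel (f n)) \<longlonglongrightarrow> ennreal (Gamma (1 - \<beta>) / \<beta> * ((s + h) powr \<beta> - h powr \<beta>))" .
  have eq: "integral\<^sup>N lborel (f n) = ennreal (\<integral>x. ell \<beta> h x * (1 - exp (- s * x)) * indicator {1/kk n..kk n} x \<partial>lborel)" for n
  proof -
    have kp: "1 / kk n > 0" using kk1[of n] by simp
    have "integral\<^sup>N lborel (f n) = (\<integral>\<^sup>+x. ennreal (ell \<beta> h x * (1 - exp (- s * x)) * indicator {1/kk n..kk n} x) \<partial>lborel)"
      unfolding f_def g_def by (simp add: ennreal_times_ind)
    also have "\<dots> = ennreal (\<integral>x. ell \<beta> h x * (1 - exp (- s * x)) * indicator {1/kk n..kk n} x \<partial>lborel)"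
    proof (rule nn_integral_eq_integral)
      show "integrable lborel (\<lambda>x. ell \<beta> h x * (1 - exp (- s * x)) * indicator {1/kk n..kk n} x)"
        by (rule ell_int[OF kp]) (intro continuous_intros)
      show "AE x in lborel. 0 \<le> ell \<beta> h x * (1 - exp (- s * x)) * indicator {1/kk n..kk n} x"
      proof (rule AE_I2)
        fix x
        show "0 \<le> ell \<beta> h x * (1 - exp (- s * x)) * indicator {1/kk n..kk n} x"
        proof (cases "x \<in> {1/kk n..kk n}")
          case True
          then have "1/kk n \<le> x" by simp
          then have "x \<ge> 0" using kp by linarith
          then show ?thesis using gnn[of x] True by (simp add: g_def)
        qed simp
      qed
    qed
    finally show ?thesis .
  qed
  have G0: "0 \<le> Gamma (1 - \<beta>) / \<beta> * ((s + h) powr \<beta> - h powr \<beta>)"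
    using b h s by (intro mult_nonneg_nonneg divide_nonneg_nonneg Gamma_real_nonneg) (auto intro: powr_mono2)
  show ?thesis
  proof (rule tendsto_ennrealD[OF _ _ G0])
    show "(\<lambda>n. ennreal (\<integral>x. ell \<beta> h x * (1 - exp (- s * x)) * indicator {1/kk n..kk n} x \<partial>lborel)) \<longlonglongrightarrow>
        ennreal (Gamma (1 - \<beta>) / \<beta> * ((s + h) powr \<beta> - h powr \<beta>))"
      using lim unfolding eq .
    show "\<forall>\<^sub>F n in sequentially. 0 \<le> (\<integral>x. ell \<beta> h x * (1 - exp (- s * x)) * indicator {1/kk n..kk n} x \<partial>lborel)"
    proof (intro always_eventually allI integral_nonneg_AE AE_I2)
      fix n x
      have kp: "1 / kk n > 0" using kk1[of n] by simp
      show "0 \<le> ell \<beta> h x * (1 - exp (- s * x)) * indicator {1/kk n..kk n} x"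
      proof (cases "x \<in> {1/kk n..kk n}")
        case True
        then have "1/kk n \<le> x" by simp
          then have "x \<ge> 0" using kp by linarith
        then show ?thesis using gnn[of x] True by (simp add: g_def)
      qed simp
    qed
  qed
qed



lemma int_ind:
  fixes a b :: real
  shows "integrable lborel (\<lambda>x. indicator {a..b} x :: real)"
  by (simp add: integrable_indicator_iff emeasure_lborel_Icc_eq)

lemma int_cont_ind:
  fixes g :: "real \<Rightarrow> real"
  assumes "\<And>x. isCont g x"
  shows "integrable lborel (\<lambda>x. g x * indicator {a..b} x)"
  by (rule borel_integrable_atLeastAtMost) (use assms in auto)

lemma V_bound:
  fixes s w :: real
  assumes s: "s \<ge> 0" and w: "w > 0"
  shows "0 \<le> (\<integral>x. (1 - exp (- s * x)) * indicator {0..1/w} x \<partial>lborel)"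
    and "(\<integral>x. (1 - exp (- s * x)) * indicator {0..1/w} x \<partial>lborel) \<le> s / w^2"
proof -
  show "0 \<le> (\<integral>x. (1 - exp (- s * x)) * indicator {0..1/w} x \<partial>lborel)"
    by (intro integral_nonneg_AE AE_I2) (use s in \<open>auto simp: indicator_def mult_nonneg_nonneg\<close>)
  have "(\<integral>x. (1 - exp (- s * x)) * indicator {0..1/w} x \<partial>lborel) \<le> (\<integral>x. (s / w) * indicator {0..1/w} x \<partial>lborel)"
  proof (rule integral_mono)
    show "integrable lborel (\<lambda>x. (1 - exp (- s * x)) * indicator {0..1/w} x)"
      by (rule int_cont_ind) (intro continuous_intros)
    show "integrable lborel (\<lambda>x. (s / w) * indicator {0..1/w} x :: real)"
      by (intro integrable_mult_right int_ind)
    fix x :: real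
    show "(1 - exp (- s * x)) * indicator {0..1/w} x \<le> (s / w) * indicator {0..1/w} x"
    proof (cases "x \<in> {0..1/w}")
      case True
      have "1 - exp (- s * x) \<le> s * x"
        using exp_ge_add_one_self[of "- s * x"] by simp
      also have "\<dots> \<le> s * (1/w)" using True s by (intro mult_left_mono) auto
      finally show ?thesis using True by simp
    qed simp
  qed
  also have "\<dots> = s / w^2" using w by (simp add: power2_eq_square)
  finally show "(\<integral>x. (1 - exp (- s * x)) * indicator {0..1/w} x \<partial>lborel) \<le> s / w^2" .
qed



lemma lt_tempered:
  fixes \<beta> h A :: real
  assumes b: "0 < \<beta>" "\<beta> < 1" and h: "h > 0" and A: "A \<ge> 0"
  shows "is_laplace_transform_prob (\<lambda>s. exp (- A * ((s + h) powr \<beta> - h powr \<beta>)))"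
proof -
  define K where "K = Gamma (1 - \<beta>) / \<beta>"
  have K: "K > 0" using b by (simp add: K_def Gamma_real_pos)
  define Ap where "Ap = A / K"
  have Ap: "Ap \<ge> 0" using A K by (simp add: Ap_def)
  define k0 :: nat where "k0 = nat \<lceil>Ap\<rceil> + 1"
  define kk where "kk n = real (n + k0)" for n
  have kk1: "kk n \<ge> 1" for n unfolding kk_def k0_def by simp
  have kkA: "Ap \<le> kk n" for n
  proof -
    have "Ap \<le> real_of_int \<lceil>Ap\<rceil>" by simp
    also have "\<dots> = real (nat \<lceil>Ap\<rceil>)" using Ap by simp
    also have "\<dots> \<le> kk n" unfolding kk_def k0_def by simp
    finally show ?thesis .
  qed
  have kkinc: "incseq kk" unfolding kk_def incseq_def by simp
  have kklim: "filterlim kk at_top sequentially"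
    unfolding kk_def by (rule filterlim_compose[OF filterlim_real_sequentially]) (rule filterlim_add_const_nat_at_top)
  define NN where "NN n = (n + k0) ^ 4" for n :: nat
  have NNr: "real (NN n) = kk n ^ 4" for n unfolding NN_def kk_def by simp
  have NNpos: "real (NN n) > 0" for n using kk1[of n] NNr[of n] by simp
  have NNlim: "filterlim NN at_top sequentially"
  proof -
    have l: "filterlim (\<lambda>n. n + k0) at_top sequentially" by (rule filterlim_add_const_nat_at_top)
    have le: "n + k0 \<le> NN n" for n
    proof -
      have "n + k0 \<ge> 1" unfolding k0_def by simp
      then have "(n + k0) ^ 1 \<le> (n + k0) ^ 4" by (intro power_increasing) auto
      then show ?thesis unfolding NN_def by simp
    qed
    show ?thesis by (rule filterlim_at_top_mono[OF l]) (use le in \<open>auto intro: always_eventually\<close>)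
  qed
  define W where "W n = real (NN n) ^ 2" for n
  have Wpos: "W n > 0" for n unfolding W_def using NNpos[of n] by simp
  define T where "T n = (\<integral>x. ell \<beta> h x * indicator {1/kk n..kk n} x \<partial>lborel)" for n
  define P where "P n s = (\<integral>x. ell \<beta> h x * (1 - exp (- s * x)) * indicator {1/kk n..kk n} x \<partial>lborel)" for n s
  define q where "q n = Ap * T n / real (NN n)" for n
  have T0: "0 \<le> T n" and T3: "T n \<le> kk n ^ 3" for n
    unfolding T_def using T_bound[OF kk1[of n] b h] by auto
  have q0: "0 \<le> q n" for n unfolding q_def using Ap T0[of n] NNpos[of n] by simp
  have q1: "q n \<le> 1" for n
  proof -
    have "q n \<le> Ap * kk n ^ 3 / kk n ^ 4"
      unfolding q_def NNr using Ap T3[of n] kk1[of n] by (intro divide_right_mono mult_left_mono) auto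
    also have "\<dots> = Ap / kk n"
    proof -
      have "kk n ^ 4 = kk n * kk n ^ 3" by (simp add: power_Suc[symmetric])
      then show ?thesis using kk1[of n] by (simp add: field_simps)
    qed
    also have "\<dots> \<le> 1" using kkA[of n] kk1[of n] by simp
    finally show ?thesis .
  qed
  have kp: "1 / kk n > 0" for n using kk1[of n] by simp
  define F where "F n x = (1 - q n) * W n * indicator {0..1/W n} x + Ap / real (NN n) * (ell \<beta> h x * indicator {1/kk n..kk n} x)" for n x
  define \<phi> where "\<phi> n s = (\<integral>x. F n x * exp (- s * x) \<partial>lborel)" for n s
  have lt\<phi>: "is_laplace_transform_prob (\<phi> n)" for n
    unfolding \<phi>_def
  proof (rule lt_density)
    show "F n \<in> borel_measurable borel" unfolding F_def by measurable
    show "0 \<le> F n x" for x unfolding F_def using q1[of n] Wpos[of n] Ap NNpos[of n]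
      by (intro add_nonneg_nonneg mult_nonneg_nonneg ell_nonneg) auto
    show "F n x = 0" if "x < 0" for x
    proof -
      have "\<not> 1 / kk n \<le> x" using kp[of n] that by linarith
      then show ?thesis unfolding F_def using that by (simp add: indicator_def)
    qed
    show "integrable lborel (F n)" unfolding F_def
    proof (rule Bochner_Integration.integrable_add)
      show "integrable lborel (\<lambda>x. (1 - q n) * W n * indicator {0..1/W n} x :: real)"
        by (rule integrable_mult_right) (rule int_ind)
      show "integrable lborel (\<lambda>x. Ap / real (NN n) * (ell \<beta> h x * indicator {1/kk n..kk n} x))"
        by (rule integrable_mult_right) (rule ell_int1[OF kp])
    qed
    have "(\<integral>x. F n x \<partial>lborel) = (\<integral>x. (1 - q n) * W n * indicator {0..1/W n} x \<partial>lborel)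
        + (\<integral>x. Ap / real (NN n) * (ell \<beta> h x * indicator {1/kk n..kk n} x) \<partial>lborel)"
      unfolding F_def
    proof (rule Bochner_Integration.integral_add)
      show "integrable lborel (\<lambda>x. (1 - q n) * W n * indicator {0..1/W n} x :: real)"
        by (rule integrable_mult_right) (rule int_ind)
      show "integrable lborel (\<lambda>x. Ap / real (NN n) * (ell \<beta> h x * indicator {1/kk n..kk n} x))"
        by (rule integrable_mult_right) (rule ell_int1[OF kp])
    qed
    also have "\<dots> = (1 - q n) * W n * (1 / W n) + Ap / real (NN n) * T n"
      unfolding T_def using Wpos[of n] by simp
    also have "\<dots> = 1" using Wpos[of n] NNpos[of n] unfolding q_def by (simp add: field_simps)
    finally show "(\<integral>x. F n x \<partial>lborel) = 1" .
  qed
  define V where "V n s = (\<integral>x. (1 - exp (- s * x)) * indicator {0..1/W n} x \<partial>lborel)" for n s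
  have key: "\<phi> n s = 1 - (1 - q n) * W n * V n s - Ap / real (NN n) * P n s" for n s
  proof -
    have i1: "integrable lborel (\<lambda>x. exp (- s * x) * indicator {0..1/W n} x)"
      by (rule int_cont_ind) (intro continuous_intros)
    have i2: "integrable lborel (\<lambda>x. (1 - exp (- s * x)) * indicator {0..1/W n} x)"
      by (rule int_cont_ind) (intro continuous_intros)
    have i3: "integrable lborel (\<lambda>x. ell \<beta> h x * exp (- s * x) * indicator {1/kk n..kk n} x)"
      by (rule ell_int[OF kp]) (intro continuous_intros)
    have i4: "integrable lborel (\<lambda>x. ell \<beta> h x * (1 - exp (- s * x)) * indicator {1/kk n..kk n} x)"
      by (rule ell_int[OF kp]) (intro continuous_intros)
    have e1: "(\<integral>x. exp (- s * x) * indicator {0..1/W n} x \<partial>lborel) = 1 / W n - V n s"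
    proof -
      have "(\<integral>x. exp (- s * x) * indicator {0..1/W n} x \<partial>lborel) =
          (\<integral>x. indicator {0..1/W n} x - (1 - exp (- s * x)) * indicator {0..1/W n} x \<partial>lborel)"
        by (rule Bochner_Integration.integral_cong) (auto simp: algebra_simps)
      also have "\<dots> = (\<integral>x. indicator {0..1/W n} x \<partial>lborel) - V n s"
        unfolding V_def by (rule Bochner_Integration.integral_diff[OF int_ind i2])
      also have "(\<integral>x. indicator {0..1/W n} x \<partial>lborel) = 1 / W n" using Wpos[of n] by simp
      finally show ?thesis .
    qed
    have e2: "(\<integral>x. ell \<beta> h x * exp (- s * x) * indicator {1/kk n..kk n} x \<partial>lborel) = T n - P n s"
    proof -
      have "(\<integral>x. ell \<beta> h x * exp (- s * x) * indicator {1/kk n..kk n} x \<partial>lborel) =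
          (\<integral>x. ell \<beta> h x * indicator {1/kk n..kk n} x - ell \<beta> h x * (1 - exp (- s * x)) * indicator {1/kk n..kk n} x \<partial>lborel)"
        by (rule Bochner_Integration.integral_cong) (auto simp: algebra_simps)
      also have "\<dots> = T n - P n s"
        unfolding T_def P_def by (rule Bochner_Integration.integral_diff[OF ell_int1[OF kp] i4])
      finally show ?thesis .
    qed
    have "\<phi> n s = (\<integral>x. (1 - q n) * W n * (exp (- s * x) * indicator {0..1/W n} x) +
        Ap / real (NN n) * (ell \<beta> h x * exp (- s * x) * indicator {1/kk n..kk n} x) \<partial>lborel)"
      unfolding \<phi>_def F_def by (rule Bochner_Integration.integral_cong) (auto simp: algebra_simps)
    also have "\<dots> = (\<integral>x. (1 - q n) * W n * (exp (- s * x) * indicator {0..1/W n} x) \<partial>lborel) +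
        (\<integral>x. Ap / real (NN n) * (ell \<beta> h x * exp (- s * x) * indicator {1/kk n..kk n} x) \<partial>lborel)"
      by (rule Bochner_Integration.integral_add; rule integrable_mult_right; rule i1 i3)
    also have "\<dots> = (1 - q n) * W n * (1 / W n - V n s) + Ap / real (NN n) * (T n - P n s)"
      by (simp only: integral_mult_right_zero e1 e2)
    also have "\<dots> = 1 - (1 - q n) * W n * V n s - Ap / real (NN n) * P n s"
      using Wpos[of n] NNpos[of n] unfolding q_def by (simp add: field_simps)
    finally show ?thesis .
  qed
  define y where "y n s = real (NN n) * (1 - q n) * W n * V n s + Ap * P n s" for n s
  have phiy: "\<phi> n s = 1 - y n s / real (NN n)" for n s
    unfolding key y_def using NNpos[of n] by (simp add: field_simps)
  have ylim: "(\<lambda>n. y n s) \<longlonglongrightarrow> A * ((s + h) powr \<beta> - h powr \<beta>)" if s: "s \<ge> 0" for s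
  proof -
    have r1: "(\<lambda>n. real (NN n) * (1 - q n) * W n * V n s) \<longlonglongrightarrow> 0"
    proof (rule tendsto_sandwich[of "\<lambda>_. 0" _ _ "\<lambda>n. s / real (NN n)"])
      show "eventually (\<lambda>n. 0 \<le> real (NN n) * (1 - q n) * W n * V n s) sequentially"
        using V_bound(1)[OF s Wpos] q1 Wpos NNpos unfolding V_def
        by (intro always_eventually allI mult_nonneg_nonneg) (auto simp: less_imp_le)
      show "eventually (\<lambda>n. real (NN n) * (1 - q n) * W n * V n s \<le> s / real (NN n)) sequentially"
      proof (intro always_eventually allI)
        fix n
        have "real (NN n) * (1 - q n) * W n * V n s \<le> real (NN n) * 1 * W n * (s / W n ^ 2)"
          using V_bound[OF s Wpos[of n]] q0[of n] q1[of n] Wpos[of n] NNpos[of n] unfolding V_def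
          by (intro mult_mono mult_left_mono) auto
        also have "\<dots> = s / real (NN n)" using Wpos[of n] NNpos[of n] unfolding W_def
          by (simp add: power2_eq_square field_simps)
        finally show "real (NN n) * (1 - q n) * W n * V n s \<le> s / real (NN n)" .
      qed
      show "(\<lambda>n. s / real (NN n)) \<longlonglongrightarrow> 0"
        by (rule tendsto_divide_0[OF tendsto_const]) 
           (rule filterlim_at_top_imp_at_infinity[OF filterlim_compose[OF filterlim_real_sequentially NNlim]])
    qed simp
    have r2: "(\<lambda>n. Ap * P n s) \<longlonglongrightarrow> Ap * (K * ((s + h) powr \<beta> - h powr \<beta>))"
      unfolding P_def K_def by (intro tendsto_mult tendsto_const P_conv[OF b h s kk1 kkinc kklim])
    have "(\<lambda>n. y n s) \<longlonglongrightarrow> 0 + Ap * (K * ((s + h) powr \<beta> - h powr \<beta>))"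
      unfolding y_def by (rule tendsto_add[OF r1 r2])
    then show ?thesis using K unfolding Ap_def by simp
  qed
  show ?thesis
  proof (rule lt_limit[where G="\<lambda>n s. \<phi> n s ^ NN n"])
    show "is_laplace_transform_prob (\<lambda>s. \<phi> n s ^ NN n)" for n by (rule lt_power[OF lt\<phi>])
    show "(\<lambda>n. \<phi> n s ^ NN n) \<longlonglongrightarrow> exp (- A * ((s + h) powr \<beta> - h powr \<beta>))" if "s \<ge> 0" for s
      unfolding phiy using pow_exp_limit[OF ylim[OF that] NNlim] by simp
    have "isCont (\<lambda>s. exp (- A * ((s + h) powr \<beta> - h powr \<beta>))) 0"
      using h by (intro continuous_intros) auto
    then have "((\<lambda>s. exp (- A * ((s + h) powr \<beta> - h powr \<beta>))) \<longlongrightarrow> 1) (at 0)"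
      by (simp add: isCont_def)
    then show "((\<lambda>s. exp (- A * ((s + h) powr \<beta> - h powr \<beta>))) \<longlongrightarrow> 1) (at_right 0)"
      by (rule tendsto_mono[OF at_within_le_at])
  qed
qed



lemma lt_cong:
  assumes "is_laplace_transform_prob f" "\<And>s. s \<ge> 0 \<Longrightarrow> f s = g s"
  shows "is_laplace_transform_prob g"
  using assms unfolding is_laplace_transform_prob_def by metis

lemma binom_sum:
  fixes a b u :: real and m :: nat
  shows "(a * u + b) ^ m = (\<Sum>k\<le>m. real (m choose k) * a ^ k * b ^ (m - k) * u ^ k)"
  unfolding binomial_ring[of "a * u" b m] by (simp add: power_mult_distrib algebra_simps)

lemma g_expand:
  fixes m n :: nat and h s :: real
  assumes m: "m \<ge> 1" and n: "n \<ge> 1" and h: "h > 0" and s: "s \<ge> 0"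
  defines "A \<equiv> \<lambda>k. real (m choose k) * (1 / real n) ^ k * ((real n - 1) / real n * h powr (1 / real m)) ^ (m - k)"
  shows "casual_g (1 / real m) h n s =
     (\<Prod>k\<in>{..m}. exp (- A k * ((s + h) powr (real k / real m) - h powr (real k / real m))))"
proof -
  define u where "u = (s + h) powr (1 / real m)"
  define h0 where "h0 = h powr (1 / real m)"
  define a where "a = 1 / real n"
  define b where "b = (real n - 1) / real n * h0"
  have u: "u > 0" unfolding u_def using h s by simp
  have h0: "h0 > 0" unfolding h0_def using h by simp
  have a: "a > 0" unfolding a_def using n by simp
  have b: "b \<ge> 0" unfolding b_def using n h0 by simp
  have X: "a * u + b > 0" using a u b by (simp add: add_pos_nonneg)
  have Ak: "A k = real (m choose k) * a ^ k * b ^ (m - k)" for k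
    unfolding A_def a_def b_def h0_def by simp
  have uk: "u ^ k = (s + h) powr (real k / real m)" for k
  proof -
    have "u ^ k = u powr real k" using u by (simp add: powr_realpow)
    also have "\<dots> = (s + h) powr (real k / real m)" unfolding u_def by (simp add: powr_powr)
    finally show ?thesis .
  qed
  have hk: "h0 ^ k = h powr (real k / real m)" for k
  proof -
    have "h0 ^ k = h0 powr real k" using h0 by (simp add: powr_realpow)
    also have "\<dots> = h powr (real k / real m)" unfolding h0_def by (simp add: powr_powr)
    finally show ?thesis .
  qed
  have hm: "h0 ^ m = h" using hk[of m] m h by simp
  have X0: "a * h0 + b = h0" unfolding a_def b_def using n by (simp add: field_simps)
  have gdef: "casual_g (1 / real m) h n s = exp (h - (a * u + b) ^ m)"
  proof -
    have "(a * u + b) powr (1 / (1 / real m)) = (a * u + b) ^ m"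
      using X m by (simp add: powr_realpow)
    then show ?thesis unfolding casual_g_def u_def a_def b_def h0_def by simp
  qed
  have "h - (a * u + b) ^ m = (a * h0 + b) ^ m - (a * u + b) ^ m" using X0 hm by simp
  also have "\<dots> = (\<Sum>k\<le>m. - A k * ((s + h) powr (real k / real m) - h powr (real k / real m)))"
    unfolding binom_sum Ak uk[symmetric] hk[symmetric]
    by (simp add: sum_subtractf[symmetric] algebra_simps)
  finally show ?thesis unfolding gdef by (simp add: exp_sum)
qed

lemma g_lt:
  fixes m n :: nat and h :: real
  assumes m: "m \<ge> 2" and n: "n \<ge> 1" and h: "h > 0"
  shows "is_laplace_transform_prob (casual_g (1 / real m) h n)"
proof -
  define A where "A = (\<lambda>k. real (m choose k) * (1 / real n) ^ k * ((real n - 1) / real n * h powr (1 / real m)) ^ (m - k))"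
  have A0: "A k \<ge> 0" for k unfolding A_def using n by simp
  have "is_laplace_transform_prob (\<lambda>s. \<Prod>k\<in>{..m}. exp (- A k * ((s + h) powr (real k / real m) - h powr (real k / real m))))"
  proof (rule lt_prod)
    fix k assume k: "k \<in> {..m}"
    show "is_laplace_transform_prob (\<lambda>s. exp (- A k * ((s + h) powr (real k / real m) - h powr (real k / real m))))"
    proof (cases "k = 0")
      case True
      show ?thesis
        by (rule lt_cong[OF lt_one]) (use True h in simp)
    next
      case False
      show ?thesis
      proof (cases "k = m")
        case True
        show ?thesis
          by (rule lt_cong[OF lt_dirac[OF A0[of k]]]) (use True h m in \<open>simp add: algebra_simps\<close>)
      next
        case False
        have "0 < real k / real m" using \<open>k \<noteq> 0\<close> m by simp
        moreover have "real k / real m < 1" using k False m by simp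
        ultimately show ?thesis by (rule lt_tempered[OF _ _ h A0])
      qed
    qed
  qed simp
  then show ?thesis
    by (rule lt_cong) (use g_expand[OF _ n h] m in \<open>simp add: A_def\<close>)
qed

theorem mainTheorem3:
  fixes m :: nat and h c :: real
  assumes "m \<ge> 2" and "h > 0" and "c > 0"
  shows "(\<forall>n::nat. n \<ge> 1 \<longrightarrow>
            is_laplace_transform_prob (casual_g (1 / real m) h n) \<and>
            (\<forall>s\<ge>0. tps_L (1 / real m) c h s =
                     (tps_L (1 / real m) c h (- ln (casual_g (1 / real m) h n s))) ^ n))
         \<and> casual_stable (tps_L (1 / real m) c h)"
proof -
  have main: "is_laplace_transform_prob (casual_g (1 / real m) h n) \<and>
            (\<forall>s\<ge>0. tps_L (1 / real m) c h s =
                     (tps_L (1 / real m) c h (- ln (casual_g (1 / real m) h n s))) ^ n)"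
    if n: "n \<ge> 1" for n
  proof
    show "is_laplace_transform_prob (casual_g (1 / real m) h n)" by (rule g_lt[OF assms(1) n assms(2)])
    show "\<forall>s\<ge>0. tps_L (1 / real m) c h s = (tps_L (1 / real m) c h (- ln (casual_g (1 / real m) h n s))) ^ n"
    proof (intro allI impI)
      fix s :: real assume s: "s \<ge> 0"
      define X where "X = (1 / real n) * (s + h) powr (1 / real m) + ((real n - 1) / real n) * h powr (1 / real m)"
      have Xpos: "X > 0" unfolding X_def using n s assms(2)
        by (intro add_pos_nonneg mult_pos_pos) auto
      have m0: "real m > 0" using assms(1) by simp
      have "- ln (casual_g (1 / real m) h n s) = X powr real m - h"
        unfolding casual_g_def X_def by simp
      then have "- ln (casual_g (1 / real m) h n s) + h = X powr real m" by simp
      then have "(- ln (casual_g (1 / real m) h n s) + h) powr (1 / real m) = X"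
        using Xpos m0 by (simp add: powr_powr)
      then have "tps_L (1 / real m) c h (- ln (casual_g (1 / real m) h n s)) = exp (- c * (X - h powr (1 / real m)))"
        unfolding tps_L_def by simp
      then have "(tps_L (1 / real m) c h (- ln (casual_g (1 / real m) h n s))) ^ n =
          exp (real n * (- c * (X - h powr (1 / real m))))"
        by (simp add: exp_of_nat_mult[symmetric])
      also have "real n * (- c * (X - h powr (1 / real m))) = - c * ((s + h) powr (1 / real m) - h powr (1 / real m))"
        unfolding X_def using n by (simp add: field_simps)
      finally show "tps_L (1 / real m) c h s = (tps_L (1 / real m) c h (- ln (casual_g (1 / real m) h n s))) ^ n"
        unfolding tps_L_def by simp
    qed
  qed
  show ?thesis
    unfolding casual_stable_def using main by blast
qed

end
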